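(* Let $q(z,\psi)$ be a joint probability density over $(z,\psi)$ with marginal $q(z)=\int q(z,\psi)\,d\psi$, fix $z$ with $q(z)>0$, and let $q(\psi\mid z)=q(z,\psi)/q(z)$. Let $\tau(\psi\mid z)$ be a probability density in $\psi$ such that for every $\psi$ with $\tau(\psi\mid z)=0$ we have $q(\psi,z)=0$. For $K\in\mathbb{N}_0$ define $$\mathcal{U}_K=\mathbb{E}_{q(\psi_0\mid z)}\,\mathbb{E}_{\tau(\psi_{1:K}\mid z)}\log\left(\frac{1}{K+1}\sum_{k=0}^{K}\frac{q(z,\psi_k)}{\tau(\psi_k\mid z)}\right),$$ where $\psi_0\sim q(\psi\mid z)$ and, independently, $\psi_1,\dots,\psi_K$ are i.i.d. from $\tau(\psi\mid z)$ (i.e. $\tau(\psi_{1:K}\mid z)=\prod_{k=1}^K\tau(\psi_k\mid z)$). Then: (1) $\mathcal{U}_K\ge\log q(z)$ for every $K\in\mathbb{N}_0$; (2) $\mathcal{U}_K\ge\mathcal{U}_{K+1}$ for every $K\in\mathbb{N}_0$; (3) $\lim_{K\to\infty}\mathcal{U}_K=\log q(z)$.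
   Context: All densities are with respect to a fixed base measure; $\log$ is the natural logarithm.
   Formalization: For every K the integrand of $\mathcal{U}_K$ is integrable with respect to $q(\psi_0\mid z)\,\tau(\psi_{1:K}\mid z)$, so each $\mathcal{U}_K$ is a finite expectation, and q(z) is finite. The statement above fails without it. *)

theory Defs
  imports "HOL-Probability.Probability"
begin

definition marg :: "'p measure \<Rightarrow> ('z \<Rightarrow> 'p \<Rightarrow> real) \<Rightarrow> 'z \<Rightarrow> real" where
  "marg M q z = (\<integral>\<psi>. q z \<psi> \<partial>M)"

definition cond :: "'p measure \<Rightarrow> ('z \<Rightarrow> 'p \<Rightarrow> real) \<Rightarrow> 'z \<Rightarrow> 'p \<Rightarrow> real" where
  "cond M q z \<psi> = q z \<psi> / marg M q z"

definition iw_log :: "('z \<Rightarrow> 'p \<Rightarrow> real) \<Rightarrow> ('p \<Rightarrow> real) \<Rightarrow> 'z \<Rightarrow> nat \<Rightarrow> 'p \<Rightarrow> (nat \<Rightarrow> 'p) \<Rightarrow> real" where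
  "iw_log q \<tau> z K \<psi>0 \<psi>s =
     ln ((1 / real (K + 1)) *
         (\<Sum>k\<in>{0..K}. (let \<psi> = (if k = 0 then \<psi>0 else \<psi>s k) in q z \<psi> / \<tau> \<psi>)))"

definition tau_prod :: "'p measure \<Rightarrow> ('p \<Rightarrow> real) \<Rightarrow> nat \<Rightarrow> (nat \<Rightarrow> 'p) measure" where
  "tau_prod M \<tau> K = PiM {1..K} (\<lambda>_. density M (\<lambda>\<psi>. ennreal (\<tau> \<psi>)))"

definition U :: "'p measure \<Rightarrow> ('z \<Rightarrow> 'p \<Rightarrow> real) \<Rightarrow> ('p \<Rightarrow> real) \<Rightarrow> 'z \<Rightarrow> nat \<Rightarrow> real" where
  "U M q \<tau> z K =
     (\<integral>\<psi>0. (\<integral>\<psi>s. iw_log q \<tau> z K \<psi>0 \<psi>s \<partial>(tau_prod M \<tau> K))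
        \<partial>(density M (\<lambda>\<psi>. ennreal (cond M q z \<psi>))))"

end

theory Submission
  imports Defs
begin

lemma tangent_xlnx:
  fixes a b :: real
  assumes "0 \<le> a" "0 \<le> b" "b = 0 \<Longrightarrow> a = 0"
  shows "a * ln a \<ge> b * ln b + (1 + ln b) * (a - b)"
proof (cases "b = 0")
  case True then show ?thesis using assms by simp
next
  case False
  then have b: "0 < b" using assms by simp
  show ?thesis
  proof (cases "a = 0")
    case True then show ?thesis using b by (simp add: algebra_simps)
  next
    case False
    then have a: "0 < a" using assms by simp
    have "ln (b / a) \<le> b / a - 1" using a b by (intro ln_le_minus_one) simp
    then have "a * ln (b / a) \<le> a * (b / a - 1)" using a by (intro mult_left_mono) auto
    then have "a * (ln b - ln a) \<le> b - a" using a b by (simp add: ln_div algebra_simps)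
    then show ?thesis by (simp add: algebra_simps)
  qed
qed

lemma ln_upper_tangent:
  fixes y c :: real
  assumes "0 < y" "0 < c"
  shows "ln y \<le> ln c + (y - c) / c"
proof -
  have "ln (y / c) \<le> y / c - 1" using assms by (intro ln_le_minus_one) simp
  then show ?thesis using assms by (simp add: ln_div diff_divide_distrib)
qed

lemma ln_between_bound:
  fixes x m c :: real
  assumes "0 < x" "0 < m" "min x m \<le> c" "c \<le> max x m"
  shows "\<bar>ln c\<bar> \<le> \<bar>ln x\<bar> + \<bar>ln m\<bar>"
proof -
  have c: "0 < c" using assms by (auto simp: min_def split: if_splits)
  have "ln (min x m) \<le> ln c" using assms c by (subst ln_le_cancel_iff) (auto simp: min_def)
  moreover have "ln c \<le> ln (max x m)" using assms c by (subst ln_le_cancel_iff) (auto simp: max_def)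
  ultimately show ?thesis by (auto simp: min_def max_def split: if_splits)
qed

lemma transfer_signed:
  fixes Fa Ga :: "'a \<Rightarrow> real" and Fb Gb :: "'b \<Rightarrow> real" and g :: "real \<Rightarrow> real"
  assumes [measurable]: "Fa \<in> borel_measurable Ma" "Ga \<in> borel_measurable Ma"
    "Fb \<in> borel_measurable Mb" "Gb \<in> borel_measurable Mb" "g \<in> borel_measurable borel"
  and F1nn: "AE \<omega> in Ma. 0 \<le> Fa \<omega>" and F2nn: "AE \<omega> in Mb. 0 \<le> Fb \<omega>" and c: "0 \<le> c"
  and eq: "\<And>h. h \<in> borel_measurable borel \<Longrightarrow>
     (\<integral>\<^sup>+\<omega>. ennreal (Fa \<omega>) * h (Ga \<omega>) \<partial>Ma) = ennreal c * (\<integral>\<^sup>+\<omega>. ennreal (Fb \<omega>) * h (Gb \<omega>) \<partial>Mb)"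
  and int: "integrable Mb (\<lambda>\<omega>. Fb \<omega> * g (Gb \<omega>))"
  shows "integrable Ma (\<lambda>\<omega>. Fa \<omega> * g (Ga \<omega>))"
    and "(\<integral>\<omega>. Fa \<omega> * g (Ga \<omega>) \<partial>Ma) = c * (\<integral>\<omega>. Fb \<omega> * g (Gb \<omega>) \<partial>Mb)"
proof -
  have gen1: "(\<integral>\<^sup>+\<omega>. ennreal (Fa \<omega> * k (Ga \<omega>)) \<partial>Ma) = ennreal c * (\<integral>\<^sup>+\<omega>. ennreal (Fb \<omega> * k (Gb \<omega>)) \<partial>Mb)"
    if [measurable]: "k \<in> borel_measurable borel" for k :: "real \<Rightarrow> real"
  proof -
    have "(\<integral>\<^sup>+\<omega>. ennreal (Fa \<omega> * k (Ga \<omega>)) \<partial>Ma) = (\<integral>\<^sup>+\<omega>. ennreal (Fa \<omega>) * ennreal (k (Ga \<omega>)) \<partial>Ma)"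
      by (rule nn_integral_cong_AE) (use F1nn in \<open>auto simp: ennreal_mult' elim: eventually_mono\<close>)
    also have "\<dots> = ennreal c * (\<integral>\<^sup>+\<omega>. ennreal (Fb \<omega>) * ennreal (k (Gb \<omega>)) \<partial>Mb)"
      by (rule eq) measurable
    also have "(\<integral>\<^sup>+\<omega>. ennreal (Fb \<omega>) * ennreal (k (Gb \<omega>)) \<partial>Mb) = (\<integral>\<^sup>+\<omega>. ennreal (Fb \<omega> * k (Gb \<omega>)) \<partial>Mb)"
      by (rule nn_integral_cong_AE) (use F2nn in \<open>auto simp: ennreal_mult' elim: eventually_mono\<close>)
    finally show ?thesis .
  qed
  have "(\<integral>\<^sup>+\<omega>. ennreal (norm (Fa \<omega> * g (Ga \<omega>))) \<partial>Ma) = (\<integral>\<^sup>+\<omega>. ennreal (Fa \<omega> * \<bar>g (Ga \<omega>)\<bar>) \<partial>Ma)"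
    by (rule nn_integral_cong_AE) (use F1nn in \<open>auto simp: abs_mult elim: eventually_mono\<close>)
  also have "\<dots> = ennreal c * (\<integral>\<^sup>+\<omega>. ennreal (Fb \<omega> * \<bar>g (Gb \<omega>)\<bar>) \<partial>Mb)"
    by (rule gen1) measurable
  also have "(\<integral>\<^sup>+\<omega>. ennreal (Fb \<omega> * \<bar>g (Gb \<omega>)\<bar>) \<partial>Mb) = (\<integral>\<^sup>+\<omega>. ennreal (norm (Fb \<omega> * g (Gb \<omega>))) \<partial>Mb)"
    by (rule nn_integral_cong_AE) (use F2nn in \<open>auto simp: abs_mult elim: eventually_mono\<close>)
  finally have "(\<integral>\<^sup>+\<omega>. ennreal (norm (Fa \<omega> * g (Ga \<omega>))) \<partial>Ma) < \<infinity>"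
    using int unfolding integrable_iff_bounded by (simp add: ennreal_mult_less_top)
  then show int1: "integrable Ma (\<lambda>\<omega>. Fa \<omega> * g (Ga \<omega>))"
    unfolding integrable_iff_bounded by simp
  have neg1: "(\<integral>\<^sup>+\<omega>. ennreal (- (Fa \<omega> * g (Ga \<omega>))) \<partial>Ma) = ennreal c * (\<integral>\<^sup>+\<omega>. ennreal (- (Fb \<omega> * g (Gb \<omega>))) \<partial>Mb)"
    using gen1[of "\<lambda>t. - g t"] by simp
  show "(\<integral>\<omega>. Fa \<omega> * g (Ga \<omega>) \<partial>Ma) = c * (\<integral>\<omega>. Fb \<omega> * g (Gb \<omega>) \<partial>Mb)"
    unfolding real_lebesgue_integral_def[OF int1] real_lebesgue_integral_def[OF int]
    by (simp add: gen1 neg1 enn2real_mult c right_diff_distrib)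
qed

locale core =
  fixes \<mu> :: "real measure" and m :: real and \<nu> :: "nat \<Rightarrow> real measure"
  assumes mu_prob: "prob_space \<mu>"
  and sets_mu[measurable_cong]: "sets \<mu> = sets borel"
  and mu_nonneg: "AE x in \<mu>. 0 \<le> x"
  and mu_mean: "(\<integral>\<^sup>+x. ennreal x \<partial>\<mu>) = ennreal m"
  and m_pos: "0 < m"
  and nu_prob: "\<And>K. prob_space (\<nu> K)"
  and sets_nu[measurable_cong]: "\<And>K. sets (\<nu> K) = sets borel"
  and nu_nonneg: "\<And>K. AE s in \<nu> K. 0 \<le> s"
  and nu0: "AE s in \<nu> 0. s = 0"
  and nuS: "\<And>K. \<nu> (Suc K) = distr (\<mu> \<Otimes>\<^sub>M \<nu> K) borel (\<lambda>(x,s). x + s)"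
  and int_hyp: "\<And>K. integrable (density \<mu> (\<lambda>x. ennreal (x / m)) \<Otimes>\<^sub>M \<nu> K)
       (\<lambda>p. ln ((1 / real (K + 1)) * (fst p + snd p)))"
begin

lemma pair_sf: "pair_sigma_finite \<mu> (\<nu> K)"
  by (intro pair_sigma_finite.intro prob_space_imp_sigma_finite mu_prob nu_prob)

lemma pair_sf_mu: "pair_sigma_finite \<mu> \<mu>"
  by (intro pair_sigma_finite.intro prob_space_imp_sigma_finite mu_prob)

lemma sf_nu: "sigma_finite_measure (\<nu> K)"
  by (intro prob_space_imp_sigma_finite nu_prob)

lemma nn_nuS:
  assumes [measurable]: "f \<in> borel_measurable borel"
  shows "(\<integral>\<^sup>+t. f t \<partial>\<nu> (Suc K)) = (\<integral>\<^sup>+x. \<integral>\<^sup>+s. f (x + s) \<partial>\<nu> K \<partial>\<mu>)"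
proof -
  interpret S: sigma_finite_measure "\<nu> K" by (rule sf_nu)
  have "(\<integral>\<^sup>+t. f t \<partial>\<nu> (Suc K)) = (\<integral>\<^sup>+p. f (fst p + snd p) \<partial>(\<mu> \<Otimes>\<^sub>M \<nu> K))"
    unfolding nuS by (subst nn_integral_distr) (auto simp: case_prod_beta')
  also have "\<dots> = (\<integral>\<^sup>+x. \<integral>\<^sup>+s. f (x + s) \<partial>\<nu> K \<partial>\<mu>)"
    by (subst S.nn_integral_fst[symmetric]) auto
  finally show ?thesis .
qed

lemma nn_nu0:
  assumes [measurable]: "f \<in> borel_measurable borel"
  shows "(\<integral>\<^sup>+t. f t \<partial>\<nu> 0) = f 0"
proof -
  interpret prob_space "\<nu> 0" by (rule nu_prob)
  have "(\<integral>\<^sup>+t. f t \<partial>\<nu> 0) = (\<integral>\<^sup>+t. f 0 \<partial>\<nu> 0)"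
    by (rule nn_integral_cong_AE) (use nu0 in auto)
  also have "\<dots> = f 0" by (simp add: emeasure_space_1)
  finally show ?thesis .
qed

lemma swap3:
  assumes [measurable]: "(\<lambda>p. f (fst (fst p)) (snd (fst p)) (snd p)) \<in> borel_measurable ((\<mu> \<Otimes>\<^sub>M \<mu>) \<Otimes>\<^sub>M \<nu> K)"
  shows "(\<integral>\<^sup>+x. \<integral>\<^sup>+y. \<integral>\<^sup>+s. f x y s \<partial>\<nu> K \<partial>\<mu> \<partial>\<mu>) = (\<integral>\<^sup>+y. \<integral>\<^sup>+x. \<integral>\<^sup>+s. f x y s \<partial>\<nu> K \<partial>\<mu> \<partial>\<mu>)"
proof -
  interpret S: sigma_finite_measure "\<nu> K" by (rule sf_nu)
  interpret P: pair_sigma_finite \<mu> \<mu> by (rule pair_sf_mu)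
  have m: "(\<lambda>p. \<integral>\<^sup>+s. f (fst p) (snd p) s \<partial>\<nu> K) \<in> borel_measurable (\<mu> \<Otimes>\<^sub>M \<mu>)"
    using S.borel_measurable_nn_integral_fst[of "\<lambda>(p,s). f (fst p) (snd p) s" "\<mu> \<Otimes>\<^sub>M \<mu>"] assms
    by (simp add: case_prod_beta')
  show ?thesis
    by (rule P.Fubini'[symmetric]) (use m in \<open>simp add: case_prod_beta'\<close>)
qed

lemma keyD:
  assumes [measurable]: "h \<in> borel_measurable borel"
  shows "(\<integral>\<^sup>+x. \<integral>\<^sup>+s. ennreal s * h (x + s) \<partial>\<nu> K \<partial>\<mu>) = of_nat K * (\<integral>\<^sup>+x. \<integral>\<^sup>+s. ennreal x * h (x + s) \<partial>\<nu> K \<partial>\<mu>)"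
  using assms
proof (induction K arbitrary: h)
  case 0
  note [measurable] = 0
  have "(\<integral>\<^sup>+x. \<integral>\<^sup>+s. ennreal s * h (x + s) \<partial>\<nu> 0 \<partial>\<mu>) = (\<integral>\<^sup>+x. 0 \<partial>\<mu>)"
    by (rule nn_integral_cong, subst nn_nu0) auto
  then show ?case by simp
next
  case (Suc K)
  note [measurable] = Suc.prems
  interpret S: sigma_finite_measure "\<nu> K" by (rule sf_nu)
  interpret M: sigma_finite_measure "\<mu>" by (intro prob_space_imp_sigma_finite mu_prob)
  define S where "S = (\<integral>\<^sup>+x. \<integral>\<^sup>+y. \<integral>\<^sup>+s. ennreal y * h (x + (y + s)) \<partial>\<nu> K \<partial>\<mu> \<partial>\<mu>)"
  have I: "(\<integral>\<^sup>+x. \<integral>\<^sup>+t. ennreal x * h (x + t) \<partial>\<nu> (Suc K) \<partial>\<mu>) = S"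
  proof -
    have "(\<integral>\<^sup>+x. \<integral>\<^sup>+t. ennreal x * h (x + t) \<partial>\<nu> (Suc K) \<partial>\<mu>)
        = (\<integral>\<^sup>+x. \<integral>\<^sup>+y. \<integral>\<^sup>+s. ennreal x * h (x + (y + s)) \<partial>\<nu> K \<partial>\<mu> \<partial>\<mu>)"
      by (rule nn_integral_cong, subst nn_nuS) auto
    also have "\<dots> = (\<integral>\<^sup>+y. \<integral>\<^sup>+x. \<integral>\<^sup>+s. ennreal x * h (x + (y + s)) \<partial>\<nu> K \<partial>\<mu> \<partial>\<mu>)"
      by (rule swap3) measurable
    also have "\<dots> = S" unfolding S_def
      by (intro nn_integral_cong) (simp add: ac_simps)
    finally show ?thesis .
  qed
  have J: "(\<integral>\<^sup>+x. \<integral>\<^sup>+t. ennreal t * h (x + t) \<partial>\<nu> (Suc K) \<partial>\<mu>)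
      = (\<integral>\<^sup>+x. \<integral>\<^sup>+y. \<integral>\<^sup>+s. ennreal (y + s) * h (x + (y + s)) \<partial>\<nu> K \<partial>\<mu> \<partial>\<mu>)"
    by (rule nn_integral_cong, subst nn_nuS) auto
  also have "\<dots> = (\<integral>\<^sup>+x. \<integral>\<^sup>+y. \<integral>\<^sup>+s. ennreal y * h (x + (y + s)) + ennreal s * h (x + (y + s)) \<partial>\<nu> K \<partial>\<mu> \<partial>\<mu>)"
  proof (rule nn_integral_cong, rule nn_integral_cong_AE)
    fix x
    show "AE y in \<mu>. (\<integral>\<^sup>+s. ennreal (y + s) * h (x + (y + s)) \<partial>\<nu> K) =
       (\<integral>\<^sup>+s. ennreal y * h (x + (y + s)) + ennreal s * h (x + (y + s)) \<partial>\<nu> K)"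
      using mu_nonneg
    proof eventually_elim
      case (elim y)
      show ?case
        by (rule nn_integral_cong_AE) (use nu_nonneg[of K] elim in \<open>auto simp: ennreal_plus distrib_right elim: eventually_mono\<close>)
    qed
  qed
  also have "\<dots> = (\<integral>\<^sup>+x. (\<integral>\<^sup>+y. \<integral>\<^sup>+s. ennreal y * h (x + (y + s)) \<partial>\<nu> K \<partial>\<mu>) + (\<integral>\<^sup>+y. \<integral>\<^sup>+s. ennreal s * h (x + (y + s)) \<partial>\<nu> K \<partial>\<mu>) \<partial>\<mu>)"
    by (intro nn_integral_cong) (simp add: nn_integral_add)
  also have "\<dots> = S + (\<integral>\<^sup>+x. (\<integral>\<^sup>+y. \<integral>\<^sup>+s. ennreal s * h (x + (y + s)) \<partial>\<nu> K \<partial>\<mu>) \<partial>\<mu>)"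
    unfolding S_def by (simp add: nn_integral_add)
  also have "(\<integral>\<^sup>+x. (\<integral>\<^sup>+y. \<integral>\<^sup>+s. ennreal s * h (x + (y + s)) \<partial>\<nu> K \<partial>\<mu>) \<partial>\<mu>) = of_nat K * S"
  proof -
    have "(\<integral>\<^sup>+x. (\<integral>\<^sup>+y. \<integral>\<^sup>+s. ennreal s * h (x + (y + s)) \<partial>\<nu> K \<partial>\<mu>) \<partial>\<mu>)
       = (\<integral>\<^sup>+x. of_nat K * (\<integral>\<^sup>+y. \<integral>\<^sup>+s. ennreal y * h (x + (y + s)) \<partial>\<nu> K \<partial>\<mu>) \<partial>\<mu>)"
      by (rule nn_integral_cong) (use Suc.IH[of "\<lambda>t. h (_ + t)"] in simp)
    also have "\<dots> = of_nat K * S" unfolding S_def by (simp add: nn_integral_cmult)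
    finally show ?thesis .
  qed
  finally show ?case using I by (simp add: distrib_right)
qed

lemma keyD_prod:
  assumes [measurable]: "h \<in> borel_measurable borel"
  shows "(\<integral>\<^sup>+p. ennreal (snd p) * h (fst p + snd p) \<partial>(\<mu> \<Otimes>\<^sub>M \<nu> K))
      = ennreal (real K) * (\<integral>\<^sup>+p. ennreal (fst p) * h (fst p + snd p) \<partial>(\<mu> \<Otimes>\<^sub>M \<nu> K))"
proof -
  interpret S: sigma_finite_measure "\<nu> K" by (rule sf_nu)
  show ?thesis
    using keyD[OF assms, of K]
    by (subst (1 2) S.nn_integral_fst[symmetric]) (auto simp: ennreal_of_nat_eq_real_of_nat)
qed

lemma AE_prod_nonneg: "AE p in \<mu> \<Otimes>\<^sub>M \<nu> K. 0 \<le> fst p \<and> 0 \<le> snd p"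
proof (rule pair_sigma_finite.AE_pair_measure[OF pair_sf])
  show "{x \<in> space (\<mu> \<Otimes>\<^sub>M \<nu> K). 0 \<le> fst x \<and> 0 \<le> snd x} \<in> sets (\<mu> \<Otimes>\<^sub>M \<nu> K)"
    by measurable
  show "AE x in \<mu>. AE y in \<nu> K. 0 \<le> fst (x, y) \<and> 0 \<le> snd (x, y)"
    using mu_nonneg by eventually_elim (use nu_nonneg[of K] in auto)
qed

lemma keyC_prod:
  assumes [measurable]: "h \<in> borel_measurable borel"
  shows "(\<integral>\<^sup>+t. ennreal t * h t \<partial>\<nu> (Suc K))
      = ennreal (real (Suc K)) * (\<integral>\<^sup>+p. ennreal (fst p) * h (fst p + snd p) \<partial>(\<mu> \<Otimes>\<^sub>M \<nu> K))"
proof -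
  interpret S: sigma_finite_measure "\<nu> K" by (rule sf_nu)
  have "(\<integral>\<^sup>+t. ennreal t * h t \<partial>\<nu> (Suc K)) = (\<integral>\<^sup>+x. \<integral>\<^sup>+s. ennreal (x + s) * h (x + s) \<partial>\<nu> K \<partial>\<mu>)"
    by (subst nn_nuS) auto
  also have "\<dots> = (\<integral>\<^sup>+p. ennreal (fst p + snd p) * h (fst p + snd p) \<partial>(\<mu> \<Otimes>\<^sub>M \<nu> K))"
    by (subst S.nn_integral_fst[symmetric]) auto
  also have "\<dots> = (\<integral>\<^sup>+p. ennreal (fst p) * h (fst p + snd p) + ennreal (snd p) * h (fst p + snd p) \<partial>(\<mu> \<Otimes>\<^sub>M \<nu> K))"
    by (rule nn_integral_cong_AE) (use AE_prod_nonneg[of K] in \<open>auto simp: ennreal_plus distrib_right elim: eventually_mono\<close>)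
  also have "\<dots> = (\<integral>\<^sup>+p. ennreal (fst p) * h (fst p + snd p) \<partial>(\<mu> \<Otimes>\<^sub>M \<nu> K)) + (\<integral>\<^sup>+p. ennreal (snd p) * h (fst p + snd p) \<partial>(\<mu> \<Otimes>\<^sub>M \<nu> K))"
    by (rule nn_integral_add) auto
  also have "\<dots> = ennreal (real (Suc K)) * (\<integral>\<^sup>+p. ennreal (fst p) * h (fst p + snd p) \<partial>(\<mu> \<Otimes>\<^sub>M \<nu> K))"
    unfolding keyD_prod[OF assms] by (simp add: ennreal_of_nat_eq_real_of_nat distrib_right)
  finally show ?thesis .
qed

lemma signedD:
  assumes [measurable]: "g \<in> borel_measurable borel"
    and int: "integrable (\<mu> \<Otimes>\<^sub>M \<nu> K) (\<lambda>p. fst p * g (fst p + snd p))"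
  shows "integrable (\<mu> \<Otimes>\<^sub>M \<nu> K) (\<lambda>p. snd p * g (fst p + snd p))"
    and "(\<integral>p. snd p * g (fst p + snd p) \<partial>(\<mu> \<Otimes>\<^sub>M \<nu> K)) = real K * (\<integral>p. fst p * g (fst p + snd p) \<partial>(\<mu> \<Otimes>\<^sub>M \<nu> K))"
proof -
  have a1: "AE p in \<mu> \<Otimes>\<^sub>M \<nu> K. 0 \<le> snd p" and a2: "AE p in \<mu> \<Otimes>\<^sub>M \<nu> K. 0 \<le> fst p"
    using AE_prod_nonneg[of K] by (auto elim: eventually_mono)
  note T = transfer_signed[where Fa=snd and Ga="\<lambda>p. fst p + snd p" and Fb=fst and Gb="\<lambda>p. fst p + snd p"
      and Ma="\<mu> \<Otimes>\<^sub>M \<nu> K" and Mb="\<mu> \<Otimes>\<^sub>M \<nu> K" and c="real K" and g=g, OF _ _ _ _ _ a1 a2 _ keyD_prod int]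
  show "integrable (\<mu> \<Otimes>\<^sub>M \<nu> K) (\<lambda>p. snd p * g (fst p + snd p))" by (rule T(1)) auto
  show "(\<integral>p. snd p * g (fst p + snd p) \<partial>(\<mu> \<Otimes>\<^sub>M \<nu> K)) = real K * (\<integral>p. fst p * g (fst p + snd p) \<partial>(\<mu> \<Otimes>\<^sub>M \<nu> K))"
    by (rule T(2)) auto
qed

lemma signedC:
  assumes [measurable]: "g \<in> borel_measurable borel"
    and int: "integrable (\<mu> \<Otimes>\<^sub>M \<nu> K) (\<lambda>p. fst p * g (fst p + snd p))"
  shows "integrable (\<nu> (Suc K)) (\<lambda>t. t * g t)"
    and "(\<integral>t. t * g t \<partial>\<nu> (Suc K)) = real (Suc K) * (\<integral>p. fst p * g (fst p + snd p) \<partial>(\<mu> \<Otimes>\<^sub>M \<nu> K))"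
proof -
  have a2: "AE p in \<mu> \<Otimes>\<^sub>M \<nu> K. 0 \<le> fst p"
    using AE_prod_nonneg[of K] by (auto elim: eventually_mono)
  note T = transfer_signed[where Fa="\<lambda>t. t" and Ga="\<lambda>t. t" and Fb=fst and Gb="\<lambda>p. fst p + snd p"
      and Ma="\<nu> (Suc K)" and Mb="\<mu> \<Otimes>\<^sub>M \<nu> K" and c="real (Suc K)" and g=g, OF _ _ _ _ _ nu_nonneg a2 _ keyC_prod int]
  show "integrable (\<nu> (Suc K)) (\<lambda>t. t * g t)" by (rule T(1)) auto
  show "(\<integral>t. t * g t \<partial>\<nu> (Suc K)) = real (Suc K) * (\<integral>p. fst p * g (fst p + snd p) \<partial>(\<mu> \<Otimes>\<^sub>M \<nu> K))"
    by (rule T(2)) auto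
qed

lemma fst_int: "integrable (\<mu> \<Otimes>\<^sub>M \<nu> K) fst" "(\<integral>p. fst p \<partial>(\<mu> \<Otimes>\<^sub>M \<nu> K)) = m"
proof -
  interpret S: prob_space "\<nu> K" by (rule nu_prob)
  have nn: "(\<integral>\<^sup>+p. ennreal (fst p) \<partial>(\<mu> \<Otimes>\<^sub>M \<nu> K)) = ennreal m"
    by (subst S.nn_integral_fst[symmetric]) (auto simp: S.emeasure_space_1 mu_mean)
  show "integrable (\<mu> \<Otimes>\<^sub>M \<nu> K) fst"
    by (rule integrableI_nonneg) (use AE_prod_nonneg[of K] nn in \<open>auto elim: eventually_mono\<close>)
  show "(\<integral>p. fst p \<partial>(\<mu> \<Otimes>\<^sub>M \<nu> K)) = m"
    by (subst integral_eq_nn_integral) (use AE_prod_nonneg[of K] nn m_pos in \<open>auto elim: eventually_mono\<close>)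
qed

lemma nu_mean: "integrable (\<nu> K) (\<lambda>s. s)" "(\<integral>s. s \<partial>\<nu> K) = real K * m"
proof -
  have "integrable (\<nu> K) (\<lambda>s. s) \<and> (\<integral>s. s \<partial>\<nu> K) = real K * m"
  proof (cases K)
    case 0
    interpret S: prob_space "\<nu> 0" by (rule nu_prob)
    have ae: "AE s in \<nu> 0. s = 0" by (rule nu0)
    have e: "(\<integral>s. s \<partial>\<nu> 0) = (\<integral>s. 0 \<partial>\<nu> 0)"
      by (rule integral_cong_AE) (measurable, rule ae)
    have ae': "AE s in \<nu> 0. 0 = s" using ae by eventually_elim simp
    have "integrable (\<nu> 0) (\<lambda>s. s)"
      by (rule integrable_cong_AE_imp[of _ "\<lambda>s. 0"]) (simp, measurable, rule ae')
    with e show ?thesis using 0 by simp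
  next
    case (Suc K')
    have i: "integrable (\<mu> \<Otimes>\<^sub>M \<nu> K') (\<lambda>p. fst p * (\<lambda>_. 1) (fst p + snd p))"
      using fst_int(1)[of K'] by simp
    have c1: "integrable (\<nu> (Suc K')) (\<lambda>t. t * (\<lambda>_. 1::real) t)"
      by (rule signedC(1)[OF _ i]) simp
    have c2: "(\<integral>t. t * (\<lambda>_. 1::real) t \<partial>\<nu> (Suc K')) = real (Suc K') * (\<integral>p. fst p * (\<lambda>_. 1) (fst p + snd p) \<partial>(\<mu> \<Otimes>\<^sub>M \<nu> K'))"
      by (rule signedC(2)[OF _ i]) simp
    show ?thesis using c1 c2 fst_int(2)[of K'] Suc by simp
  qed
  then show "integrable (\<nu> K) (\<lambda>s. s)" "(\<integral>s. s \<partial>\<nu> K) = real K * m" by auto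
qed

lemma snd_int:
  fixes f :: "real \<Rightarrow> real"
  assumes "integrable (\<nu> K) f"
  shows "integrable (\<mu> \<Otimes>\<^sub>M \<nu> K) (\<lambda>p. f (snd p))" "(\<integral>p. f (snd p) \<partial>(\<mu> \<Otimes>\<^sub>M \<nu> K)) = (\<integral>s. f s \<partial>\<nu> K)"
proof -
  interpret M: prob_space \<mu> by (rule mu_prob)
  interpret P: pair_sigma_finite "\<nu> K" \<mu> using pair_sf[of K] by (simp add: pair_sigma_finite_def)
  have d: "distr (\<nu> K \<Otimes>\<^sub>M \<mu>) (\<nu> K) fst = \<nu> K" by (rule M.distr_pair_fst)
  have m[measurable]: "f \<in> borel_measurable (\<nu> K)" using assms by auto
  have i1: "integrable (\<nu> K \<Otimes>\<^sub>M \<mu>) (\<lambda>p. f (fst p))"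
    using assms integrable_distr_eq[of fst "\<nu> K \<Otimes>\<^sub>M \<mu>" "\<nu> K" f] d by simp
  have e1: "(\<integral>p. f (fst p) \<partial>(\<nu> K \<Otimes>\<^sub>M \<mu>)) = (\<integral>s. f s \<partial>\<nu> K)"
    by (subst (2) d[symmetric]) (simp add: integral_distr)
  show "integrable (\<mu> \<Otimes>\<^sub>M \<nu> K) (\<lambda>p. f (snd p))"
    using i1 P.integrable_product_swap_iff[of "\<lambda>p. f (fst p)"] by (simp add: case_prod_beta')
  show "(\<integral>p. f (snd p) \<partial>(\<mu> \<Otimes>\<^sub>M \<nu> K)) = (\<integral>s. f s \<partial>\<nu> K)"
    using e1 P.integral_product_swap[of "\<lambda>p. f (fst p)"] by (simp add: case_prod_beta' m)
qed

lemma Lam_prob: "prob_space (density \<mu> (\<lambda>x. ennreal (x / m)))"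
proof (rule prob_spaceI)
  have "(\<integral>\<^sup>+x. ennreal (x / m) \<partial>\<mu>) = (\<integral>\<^sup>+x. ennreal x * ennreal (1 / m) \<partial>\<mu>)"
  proof (intro nn_integral_cong)
    fix x show "ennreal (x / m) = ennreal x * ennreal (1 / m)"
      using ennreal_mult''[of "1/m" x] m_pos by simp
  qed
  also have "\<dots> = ennreal m * ennreal (1 / m)" by (simp add: nn_integral_multc mu_mean)
  also have "\<dots> = 1" using m_pos by (simp add: ennreal_mult''[symmetric])
  finally show "emeasure (density \<mu> (\<lambda>x. ennreal (x / m))) (space (density \<mu> (\<lambda>x. ennreal (x / m)))) = 1"
    by (simp add: emeasure_density)
qed

lemma Lam_prod:
  "density \<mu> (\<lambda>x. ennreal (x / m)) \<Otimes>\<^sub>M \<nu> K = density (\<mu> \<Otimes>\<^sub>M \<nu> K) (\<lambda>p. ennreal (fst p / m))"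
proof -
  have "density \<mu> (\<lambda>x. ennreal (x / m)) \<Otimes>\<^sub>M \<nu> K = density \<mu> (\<lambda>x. ennreal (x / m)) \<Otimes>\<^sub>M density (\<nu> K) (\<lambda>_. 1)"
    by (simp add: density_1)
  also have "\<dots> = density (\<mu> \<Otimes>\<^sub>M \<nu> K) (\<lambda>(x,y). ennreal (x / m) * 1)"
    by (rule pair_measure_density) (simp_all add: density_1 sf_nu)
  also have "\<dots> = density (\<mu> \<Otimes>\<^sub>M \<nu> K) (\<lambda>p. ennreal (fst p / m))"
    by (simp add: case_prod_beta')
  finally show ?thesis .
qed

definition gK :: "nat \<Rightarrow> real \<Rightarrow> real" where "gK K t = ln ((1 / real (K + 1)) * t)"

lemma gK_meas[measurable]: "gK K \<in> borel_measurable borel"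
  unfolding gK_def by measurable

lemma V_eq:
  shows "integrable (\<mu> \<Otimes>\<^sub>M \<nu> K) (\<lambda>p. fst p * gK K (fst p + snd p))"
    and "(\<integral>x. (\<integral>s. ln ((1 / real (K + 1)) * (x + s)) \<partial>\<nu> K) \<partial>density \<mu> (\<lambda>x. ennreal (x / m)))
        = (1 / m) * (\<integral>p. fst p * gK K (fst p + snd p) \<partial>(\<mu> \<Otimes>\<^sub>M \<nu> K))"
proof -
  let ?L = "density \<mu> (\<lambda>x. ennreal (x / m))"
  interpret L: prob_space ?L by (rule Lam_prob)
  interpret S: prob_space "\<nu> K" by (rule nu_prob)
  interpret P: pair_sigma_finite ?L "\<nu> K" by unfold_locales
  have nnf: "AE p in \<mu> \<Otimes>\<^sub>M \<nu> K. 0 \<le> fst p / m"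
    using AE_prod_nonneg[of K] m_pos by (auto elim: eventually_mono)
  have i0: "integrable (density (\<mu> \<Otimes>\<^sub>M \<nu> K) (\<lambda>p. ennreal (fst p / m))) (\<lambda>p. gK K (fst p + snd p))"
    using int_hyp[of K] unfolding Lam_prod gK_def .
  have i1: "integrable (\<mu> \<Otimes>\<^sub>M \<nu> K) (\<lambda>p. (fst p / m) * gK K (fst p + snd p))"
    using i0 by (subst (asm) integrable_density) (use nnf in auto)
  have eqf: "(\<lambda>p. fst p * gK K (fst p + snd p)) = (\<lambda>p. m * ((fst p / m) * gK K (fst p + snd p)))"
    using m_pos by (auto simp: fun_eq_iff)
  show "integrable (\<mu> \<Otimes>\<^sub>M \<nu> K) (\<lambda>p. fst p * gK K (fst p + snd p))"
    unfolding eqf by (rule integrable_mult_right) (rule i1)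
  have "(\<integral>x. (\<integral>s. ln ((1 / real (K + 1)) * (x + s)) \<partial>\<nu> K) \<partial>?L)
      = (\<integral>p. gK K (fst p + snd p) \<partial>(?L \<Otimes>\<^sub>M \<nu> K))"
    using P.integral_fst'[OF int_hyp[of K]] by (simp add: gK_def)
  also have "\<dots> = (\<integral>p. (fst p / m) * gK K (fst p + snd p) \<partial>(\<mu> \<Otimes>\<^sub>M \<nu> K))"
    unfolding Lam_prod by (subst integral_density) (use nnf in auto)
  also have "\<dots> = (1 / m) * (\<integral>p. fst p * gK K (fst p + snd p) \<partial>(\<mu> \<Otimes>\<^sub>M \<nu> K))"
    by (simp add: integral_mult_right_zero[symmetric] field_simps)
  finally show "(\<integral>x. (\<integral>s. ln ((1 / real (K + 1)) * (x + s)) \<partial>\<nu> K) \<partial>?L)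
        = (1 / m) * (\<integral>p. fst p * gK K (fst p + snd p) \<partial>(\<mu> \<Otimes>\<^sub>M \<nu> K))" .
qed

definition EK :: "nat \<Rightarrow> real" where
  "EK K = (\<integral>p. fst p * gK K (fst p + snd p) \<partial>(\<mu> \<Otimes>\<^sub>M \<nu> K))"

lemma EK_C:
  "integrable (\<nu> (Suc K)) (\<lambda>t. t * gK K t)"
  "(\<integral>t. t * gK K t \<partial>\<nu> (Suc K)) = real (Suc K) * EK K"
  using signedC[OF gK_meas V_eq(1)] unfolding EK_def by auto

lemma part1: "m * ln m \<le> EK K"
proof -
  interpret S: prob_space "\<nu> (Suc K)" by (rule nu_prob)
  define n where "n = real (Suc K)"
  have n: "0 < n" unfolding n_def by simp
  have pw: "n * m * ln m + (1 + ln m) * (t - n * m) \<le> t * gK K t" if t: "0 \<le> t" for t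
  proof -
    have "(n * m) * ln m + (1 + ln m) * (t - n * m) = n * (m * ln m + (1 + ln m) * (t / n - m))"
      using n by (simp add: algebra_simps)
    also have "\<dots> \<le> n * ((t / n) * ln (t / n))"
      using n t m_pos by (intro mult_left_mono tangent_xlnx) auto
    also have "\<dots> = t * gK K t" unfolding gK_def n_def by simp
    finally show ?thesis .
  qed
  have ints: "integrable (\<nu> (Suc K)) (\<lambda>t. n * m * ln m + (1 + ln m) * (t - n * m))"
    using nu_mean(1)[of "Suc K"] by simp
  have "(\<integral>t. n * m * ln m + (1 + ln m) * (t - n * m) \<partial>\<nu> (Suc K)) \<le> (\<integral>t. t * gK K t \<partial>\<nu> (Suc K))"
    by (rule integral_mono_AE[OF ints EK_C(1)]) (use nu_nonneg[of "Suc K"] pw in \<open>auto elim: eventually_mono\<close>)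
  moreover have "(\<integral>t. n * m * ln m + (1 + ln m) * (t - n * m) \<partial>\<nu> (Suc K)) = n * m * ln m"
    using nu_mean[of "Suc K"] unfolding n_def
    by (simp add: Bochner_Integration.integral_add Bochner_Integration.integral_diff S.prob_space)
  ultimately have "n * (m * ln m) \<le> n * EK K" using EK_C(2) unfolding n_def by (simp add: mult.assoc)
  then show ?thesis using n by simp
qed

lemma part2: "EK (Suc K) \<le> EK K"
proof -
  define n where "n = real (Suc K)"
  define n' where "n' = real (Suc (Suc K))"
  have n: "0 < n" "n' = n + 1" unfolding n_def n'_def by simp_all
  let ?P = "\<mu> \<Otimes>\<^sub>M \<nu> (Suc K)"
  define G where "G = gK (Suc K)"
  define g where "g = gK K"
  have [measurable]: "G \<in> borel_measurable borel" "g \<in> borel_measurable borel"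
    unfolding G_def g_def by simp_all
  define A where "A p = (fst p + snd p) * G (fst p + snd p)" for p :: "real \<times> real"
  define B where "B p = snd p * (1 + G (fst p + snd p))" for p :: "real \<times> real"
  define C where "C p = fst p * (1 + G (fst p + snd p))" for p :: "real \<times> real"
  define D where "D p = snd p * g (snd p)" for p :: "real \<times> real"
  have iA0: "integrable (\<nu> (Suc (Suc K))) (\<lambda>t. t * G t)" and eA0: "(\<integral>t. t * G t \<partial>\<nu> (Suc (Suc K))) = n' * EK (Suc K)"
    using EK_C[of "Suc K"] unfolding G_def n'_def by auto
  have iA: "integrable ?P A"
    using iA0 unfolding nuS[of "Suc K"] A_def
    by (subst (asm) integrable_distr_eq) (auto simp: case_prod_beta')
  have eA: "(\<integral>p. A p \<partial>?P) = n' * EK (Suc K)"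
    using eA0 unfolding nuS[of "Suc K"] A_def
    by (subst (asm) integral_distr) (auto simp: case_prod_beta')
  have iD: "integrable ?P D" and eD: "(\<integral>p. D p \<partial>?P) = n * EK K"
    using snd_int[OF EK_C(1)[of K]] EK_C(2)[of K] unfolding D_def g_def n_def by auto
  have iC: "integrable ?P (\<lambda>p. fst p * (\<lambda>t. 1 + G t) (fst p + snd p))"
  proof -
    have "integrable ?P (\<lambda>p. fst p + fst p * G (fst p + snd p))"
      using fst_int(1)[of "Suc K"] V_eq(1)[of "Suc K"] unfolding G_def by simp
    then show ?thesis by (simp add: algebra_simps)
  qed
  note SD = signedD[OF _ iC]
  have iB: "integrable ?P B" using SD(1) unfolding B_def by simp
  have eBC: "(\<integral>p. B p \<partial>?P) = n * (\<integral>p. C p \<partial>?P)"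
    using SD(2) unfolding B_def C_def n_def by simp
  have iC': "integrable ?P C" using iC unfolding C_def by simp
  have pw: "A p / n' + (B p - n * C p) / (n * n') \<le> D p / n"
    if p: "0 \<le> fst p \<and> 0 \<le> snd p" for p
  proof -
    obtain x s where xs: "p = (x, s)" by (cases p)
    have x: "0 \<le> x" and s: "0 \<le> s" using p xs by auto
    define a where "a = s / n"
    define b where "b = (x + s) / n'"
    have a0: "0 \<le> a" and b0: "0 \<le> b" using x s n unfolding a_def b_def by auto
    have ab: "b = 0 \<Longrightarrow> a = 0" using x s n unfolding a_def b_def by auto
    have "b * ln b + (1 + ln b) * (a - b) \<le> a * ln a" by (rule tangent_xlnx[OF a0 b0 ab])
    moreover have "A p / n' = b * ln b"
      unfolding A_def xs b_def G_def gK_def n'_def by simp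
    moreover have "D p / n = a * ln a"
      unfolding D_def xs a_def g_def gK_def n_def by simp
    moreover have "(B p - n * C p) / (n * n') = (1 + ln b) * (a - b)"
    proof -
      have "G (x + s) = ln b" unfolding G_def gK_def b_def n'_def by simp
      moreover have "(s - n * x) / (n * n') = a - b"
        using n unfolding a_def b_def by (simp add: field_simps)
      moreover have "B p - n * C p = (1 + G (x + s)) * (s - n * x)"
        unfolding B_def C_def xs by (simp add: algebra_simps)
      ultimately show ?thesis by (metis times_divide_eq_right)
    qed
    ultimately show ?thesis by simp
  qed
  have mono: "(\<integral>p. A p / n' + (B p - n * C p) / (n * n') \<partial>?P) \<le> (\<integral>p. D p / n \<partial>?P)"
    by (rule integral_mono_AE) (use iA iB iC' iD AE_prod_nonneg[of "Suc K"] pw in \<open>auto elim: eventually_mono\<close>)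
  have l: "(\<integral>p. A p / n' + (B p - n * C p) / (n * n') \<partial>?P) = EK (Suc K)"
    using iA iB iC' eA eBC n
    by (simp add: Bochner_Integration.integral_add Bochner_Integration.integral_diff)
  have r: "(\<integral>p. D p / n \<partial>?P) = EK K" using eD n by simp
  show ?thesis using mono l r by simp
qed

lemma fst_int_gen:
  fixes f :: "real \<Rightarrow> real"
  assumes "integrable \<mu> f"
  shows "integrable (\<mu> \<Otimes>\<^sub>M \<nu> K) (\<lambda>p. f (fst p))" "(\<integral>p. f (fst p) \<partial>(\<mu> \<Otimes>\<^sub>M \<nu> K)) = (\<integral>x. f x \<partial>\<mu>)"
proof -
  interpret S: prob_space "\<nu> K" by (rule nu_prob)
  have d: "distr (\<mu> \<Otimes>\<^sub>M \<nu> K) \<mu> fst = \<mu>" by (rule S.distr_pair_fst)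
  have m[measurable]: "f \<in> borel_measurable \<mu>" using assms by auto
  show "integrable (\<mu> \<Otimes>\<^sub>M \<nu> K) (\<lambda>p. f (fst p))"
    using assms integrable_distr_eq[of fst "\<mu> \<Otimes>\<^sub>M \<nu> K" \<mu> f] d by simp
  show "(\<integral>p. f (fst p) \<partial>(\<mu> \<Otimes>\<^sub>M \<nu> K)) = (\<integral>x. f x \<partial>\<mu>)"
    by (subst (2) d[symmetric]) (simp add: integral_distr)
qed

lemma mu_int: "integrable \<mu> (\<lambda>x. x)" "(\<integral>x. x \<partial>\<mu>) = m"
proof -
  show "integrable \<mu> (\<lambda>x. x)"
    by (rule integrableI_nonneg) (use mu_nonneg mu_mean in auto)
  show "(\<integral>x. x \<partial>\<mu>) = m"
    by (subst integral_eq_nn_integral) (use mu_nonneg mu_mean m_pos in auto)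
qed

lemma xlnx_int: "integrable \<mu> (\<lambda>x. x * ln x)"
proof -
  interpret P: pair_sigma_finite \<mu> "\<nu> 0" by (rule pair_sf)
  interpret S: prob_space "\<nu> 0" by (rule nu_prob)
  have i: "integrable \<mu> (\<lambda>x. \<integral>s. x * gK 0 (x + s) \<partial>\<nu> 0)"
    using P.integrable_fst'[OF V_eq(1)[of 0]] by simp
  have e: "(\<integral>s. x * gK 0 (x + s) \<partial>\<nu> 0) = x * ln x" for x
  proof -
    have "(\<integral>s. x * gK 0 (x + s) \<partial>\<nu> 0) = (\<integral>s. x * ln x \<partial>\<nu> 0)"
    proof (rule integral_cong_AE)
      show "AE s in \<nu> 0. x * gK 0 (x + s) = x * ln x"
        using nu0 by eventually_elim (simp add: gK_def)
    qed measurable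
    also have "\<dots> = x * ln x" by (simp add: S.prob_space)
    finally show ?thesis .
  qed
  show ?thesis using i unfolding e .
qed

definition hK :: "nat \<Rightarrow> real \<Rightarrow> real" where
  "hK K x = x * ln ((x + real K * m) / real (K + 1))"

lemma hK_meas[measurable]: "hK K \<in> borel_measurable borel"
  unfolding hK_def by measurable

lemma hK_bound:
  assumes x: "0 \<le> x"
  shows "\<bar>hK K x\<bar> \<le> \<bar>x * ln x\<bar> + \<bar>x\<bar> * \<bar>ln m\<bar>"
proof (cases "x = 0")
  case True then show ?thesis by (simp add: hK_def)
next
  case False
  then have x: "0 < x" using x by simp
  define c where "c = (x + real K * m) / real (K + 1)"
  have "real K * min x m \<le> real K * x" "real K * min x m \<le> real K * m"
    by (intro mult_left_mono; simp)+
  then have "real (K + 1) * min x m \<le> x + real K * m"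
    by (simp add: algebra_simps)
  then have c1: "min x m \<le> c" unfolding c_def by (simp add: pos_le_divide_eq mult.commute)
  have "real K * x \<le> real K * max x m" "real K * m \<le> real K * max x m"
    by (intro mult_left_mono; simp)+
  then have "x + real K * m \<le> real (K + 1) * max x m"
    by (simp add: algebra_simps)
  then have c2: "c \<le> max x m" unfolding c_def by (simp add: pos_divide_le_eq mult.commute)
  have "\<bar>ln c\<bar> \<le> \<bar>ln x\<bar> + \<bar>ln m\<bar>" by (rule ln_between_bound[OF x m_pos c1 c2])
  then have "x * \<bar>ln c\<bar> \<le> x * (\<bar>ln x\<bar> + \<bar>ln m\<bar>)" using x by (intro mult_left_mono) auto
  then show ?thesis using x unfolding hK_def c_def[symmetric] by (simp add: abs_mult algebra_simps)
qed

lemma hK_lim: "(\<lambda>K. hK K x) \<longlonglongrightarrow> x * ln m"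
proof -
  have e: "(x + real K * m) / real (K + 1) = m + (x - m) * inverse (real (Suc K))" for K
    by (simp add: field_simps)
  have "(\<lambda>K. m + (x - m) * inverse (real (Suc K))) \<longlonglongrightarrow> m + (x - m) * 0"
    by (intro tendsto_intros LIMSEQ_inverse_real_of_nat)
  then have "(\<lambda>K. (x + real K * m) / real (K + 1)) \<longlonglongrightarrow> m" unfolding e by simp
  then have "(\<lambda>K. x * ln ((x + real K * m) / real (K + 1))) \<longlonglongrightarrow> x * ln m"
    using m_pos by (intro tendsto_intros) auto
  then show ?thesis unfolding hK_def .
qed

lemma hK_conv: "integrable \<mu> (hK K)" "(\<lambda>K. \<integral>x. hK K x \<partial>\<mu>) \<longlonglongrightarrow> m * ln m"
proof -
  have w: "integrable \<mu> (\<lambda>x. \<bar>x * ln x\<bar> + \<bar>x\<bar> * \<bar>ln m\<bar>)"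
    using xlnx_int mu_int(1) by (intro Bochner_Integration.integrable_add integrable_abs integrable_mult_left)
  have lim: "AE x in \<mu>. (\<lambda>K. hK K x) \<longlonglongrightarrow> x * ln m" by (simp add: hK_lim)
  have bd: "AE x in \<mu>. norm (hK K x) \<le> \<bar>x * ln x\<bar> + \<bar>x\<bar> * \<bar>ln m\<bar>" for K
    using mu_nonneg by (auto elim!: eventually_mono intro: hK_bound)
  note DC = integrable_dominated_convergence2[OF _ _ w lim bd] integral_dominated_convergence[OF _ _ w lim bd]
  show "integrable \<mu> (hK K)" by (rule DC(1)) auto
  have "(\<lambda>K. \<integral>x. hK K x \<partial>\<mu>) \<longlonglongrightarrow> (\<integral>x. x * ln m \<partial>\<mu>)" by (rule DC(2)) auto
  also have "(\<integral>x. x * ln m \<partial>\<mu>) = m * ln m" using mu_int by simp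
  finally show "(\<lambda>K. \<integral>x. hK K x \<partial>\<mu>) \<longlonglongrightarrow> m * ln m" .
qed

lemma part3: "EK K \<le> (\<integral>x. hK K x \<partial>\<mu>)"
proof -
  interpret M: prob_space \<mu> by (rule mu_prob)
  interpret S: prob_space "\<nu> K" by (rule nu_prob)
  interpret PP: pair_prob_space \<mu> "\<nu> K" by unfold_locales
  let ?P = "\<mu> \<Otimes>\<^sub>M \<nu> K"
  define Z where "Z p = (fst p / (fst p + real K * m)) * (snd p - real K * m)" for p :: "real \<times> real"
  have [measurable]: "Z \<in> borel_measurable ?P" unfolding Z_def by measurable
  have isnd: "integrable ?P (\<lambda>p. snd p)" using snd_int(1)[OF nu_mean(1)[of K]] .
  have ibd: "integrable ?P (\<lambda>p. \<bar>snd p\<bar> + real K * m)"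
    using isnd by (intro Bochner_Integration.integrable_add integrable_abs) auto
  have zb: "norm (Z p) \<le> norm (\<bar>snd p\<bar> + real K * m)" if p: "0 \<le> fst p \<and> 0 \<le> snd p" for p
  proof -
    have r: "\<bar>fst p / (fst p + real K * m)\<bar> \<le> 1"
      using p m_pos by (cases "fst p + real K * m = 0") (auto simp: divide_le_eq_1 abs_le_iff)
    have "\<bar>Z p\<bar> = \<bar>fst p / (fst p + real K * m)\<bar> * \<bar>snd p - real K * m\<bar>" unfolding Z_def by (simp add: abs_mult)
    also have "\<dots> \<le> 1 * \<bar>snd p - real K * m\<bar>" by (intro mult_right_mono r) auto
    also have "\<dots> \<le> \<bar>snd p\<bar> + real K * m"
      using abs_triangle_ineq4[of "snd p" "real K * m"] m_pos by simp
    finally show ?thesis using m_pos by simp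
  qed
  have iZ: "integrable ?P Z"
    by (rule Bochner_Integration.integrable_bound[OF ibd]) (use AE_prod_nonneg[of K] zb in \<open>auto elim: eventually_mono\<close>)
  have eZ: "(\<integral>p. Z p \<partial>?P) = 0"
  proof -
    have "(\<integral>p. Z p \<partial>?P) = (\<integral>x. (\<integral>s. Z (x, s) \<partial>\<nu> K) \<partial>\<mu>)"
      using PP.integral_fst'[OF iZ] by simp
    also have "\<dots> = (\<integral>x. 0 \<partial>\<mu>)"
    proof (rule Bochner_Integration.integral_cong[OF refl])
      fix x
      have "(\<integral>s. Z (x, s) \<partial>\<nu> K) = (x / (x + real K * m)) * (\<integral>s. s - real K * m \<partial>\<nu> K)"
        unfolding Z_def by simp
      also have "(\<integral>s. s - real K * m \<partial>\<nu> K) = 0"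
        using nu_mean[of K] by (simp add: Bochner_Integration.integral_diff S.prob_space)
      finally show "(\<integral>s. Z (x, s) \<partial>\<nu> K) = 0" by simp
    qed
    finally show ?thesis by simp
  qed
  have ih: "integrable ?P (\<lambda>p. hK K (fst p))" and eh: "(\<integral>p. hK K (fst p) \<partial>?P) = (\<integral>x. hK K x \<partial>\<mu>)"
    using fst_int_gen[OF hK_conv(1)[of K]] by auto
  have pw: "fst p * gK K (fst p + snd p) \<le> hK K (fst p) + Z p" if p: "0 \<le> fst p \<and> 0 \<le> snd p" for p
  proof (cases "fst p = 0")
    case True then show ?thesis by (simp add: hK_def Z_def)
  next
    case False
    obtain x s where xs: "p = (x, s)" by (cases p)
    have x: "0 < x" and s: "0 \<le> s" using p xs False by auto
    define y where "y = (1 / real (K + 1)) * (x + s)"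
    define c where "c = (x + real K * m) / real (K + 1)"
    have y: "0 < y" unfolding y_def using x s by simp
    have "0 \<le> real K * m" using m_pos by simp
    then have c: "0 < c" unfolding c_def using x by (intro divide_pos_pos) auto
    have "ln y \<le> ln c + (y - c) / c" by (rule ln_upper_tangent[OF y c])
    moreover have "(y - c) / c = (s - real K * m) / (x + real K * m)"
    proof -
      have pos: "0 < x + real K * m" using x \<open>0 \<le> real K * m\<close> by linarith
      have d: "y - c = (s - real K * m) / real (K + 1)"
        unfolding y_def c_def by (simp add: diff_divide_distrib[symmetric] algebra_simps)
      have "(y - c) / c = ((s - real K * m) / real (K + 1)) / c" by (simp only: d)
      also have "\<dots> = (s - real K * m) / (x + real K * m)"
        unfolding c_def using pos by (simp del: of_nat_Suc)
      finally show ?thesis .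
    qed
    ultimately have "x * ln y \<le> x * (ln c + (s - real K * m) / (x + real K * m))"
      using x by (intro mult_left_mono) auto
    then show ?thesis unfolding xs hK_def Z_def gK_def y_def c_def
      by (simp add: algebra_simps)
  qed
  have "EK K \<le> (\<integral>p. hK K (fst p) + Z p \<partial>?P)"
    unfolding EK_def
    by (rule integral_mono_AE) (use V_eq(1)[of K] ih iZ AE_prod_nonneg[of K] pw in \<open>auto elim: eventually_mono\<close>)
  also have "\<dots> = (\<integral>x. hK K x \<partial>\<mu>)"
    using ih iZ eh eZ by simp
  finally show ?thesis .
qed

theorem core_main:
  defines "V \<equiv> \<lambda>K. (\<integral>x. (\<integral>s. ln ((1 / real (K + 1)) * (x + s)) \<partial>\<nu> K) \<partial>density \<mu> (\<lambda>x. ennreal (x / m)))"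
  shows "(\<forall>K. V K \<ge> ln m) \<and> (\<forall>K. V K \<ge> V (Suc K)) \<and> V \<longlonglongrightarrow> ln m"
proof -
  have VE: "V K = EK K / m" for K unfolding V_def V_eq(2) EK_def by simp
  have 1: "V K \<ge> ln m" for K
    unfolding VE using part1[of K] m_pos by (simp add: pos_le_divide_eq mult.commute)
  have 2: "V K \<ge> V (Suc K)" for K
    unfolding VE using part2[of K] m_pos by (simp add: divide_right_mono)
  have up: "V K \<le> (\<integral>x. hK K x \<partial>\<mu>) / m" for K
    unfolding VE using part3[of K] m_pos by (simp add: divide_right_mono)
  have lim: "(\<lambda>K. (\<integral>x. hK K x \<partial>\<mu>) / m) \<longlonglongrightarrow> m * ln m / m"
    by (intro tendsto_divide hK_conv(2)) (use m_pos in auto)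
  have lim': "(\<lambda>K. (\<integral>x. hK K x \<partial>\<mu>) / m) \<longlonglongrightarrow> ln m" using lim m_pos by simp
  have 3: "V \<longlonglongrightarrow> ln m"
    by (rule tendsto_sandwich[OF _ _ tendsto_const lim']) (use 1 up in \<open>auto intro: always_eventually\<close>)
  show ?thesis using 1 2 3 by auto
qed

end

theorem theorem1:
  fixes N :: "'z measure" and M :: "'p measure"
    and q :: "'z \<Rightarrow> 'p \<Rightarrow> real" and \<tau> :: "'p \<Rightarrow> real" and z :: 'z
  assumes "sigma_finite_measure N" and "sigma_finite_measure M"
    and q_meas: "(\<lambda>x. q (fst x) (snd x)) \<in> borel_measurable (N \<Otimes>\<^sub>M M)"
    and q_nonneg: "\<And>z \<psi>. z \<in> space N \<Longrightarrow> \<psi> \<in> space M \<Longrightarrow> 0 \<le> q z \<psi>"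
    and q_int: "integrable (N \<Otimes>\<^sub>M M) (\<lambda>x. q (fst x) (snd x))"
    and q_norm: "(\<integral>x. q (fst x) (snd x) \<partial>(N \<Otimes>\<^sub>M M)) = 1"
    and z: "z \<in> space N"
    and qz_int: "integrable M (q z)"
    and qz_pos: "marg M q z > 0"
    and tau_meas: "\<tau> \<in> borel_measurable M"
    and tau_nonneg: "\<And>\<psi>. \<psi> \<in> space M \<Longrightarrow> 0 \<le> \<tau> \<psi>"
    and tau_int: "integrable M \<tau>"
    and tau_norm: "(\<integral>\<psi>. \<tau> \<psi> \<partial>M) = 1"
    and support: "\<And>\<psi>. \<psi> \<in> space M \<Longrightarrow> \<tau> \<psi> = 0 \<Longrightarrow> q z \<psi> = 0"
    and U_finite: "\<And>K. integrable
        (density M (\<lambda>\<psi>. ennreal (cond M q z \<psi>)) \<Otimes>\<^sub>M tau_prod M \<tau> K)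
        (\<lambda>x. iw_log q \<tau> z K (fst x) (snd x))"
  shows "(\<forall>K. U M q \<tau> z K \<ge> ln (marg M q z))
       \<and> (\<forall>K. U M q \<tau> z K \<ge> U M q \<tau> z (Suc K))
       \<and> (\<lambda>K. U M q \<tau> z K) \<longlonglongrightarrow> ln (marg M q z)"
  
proof -
  have qm[measurable]: "q z \<in> borel_measurable M" using qz_int by auto
  note tau_meas[measurable]
  define P where "P = density M (\<lambda>\<psi>. ennreal (\<tau> \<psi>))"
  have sets_P[measurable_cong]: "sets P = sets M" by (simp add: P_def)
  have space_P: "space P = space M" by (simp add: P_def)
  have P_prob: "prob_space P"
  proof (rule prob_spaceI)
    have "(\<integral>\<^sup>+\<psi>. ennreal (\<tau> \<psi>) \<partial>M) = ennreal (\<integral>\<psi>. \<tau> \<psi> \<partial>M)"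
      by (rule nn_integral_eq_integral[OF tau_int]) (use tau_nonneg in auto)
    then show "emeasure P (space P) = 1"
      unfolding P_def by (simp add: emeasure_density tau_norm)
  qed
  define w where "w = (\<lambda>\<psi>. q z \<psi> / \<tau> \<psi>)"
  have w_meas[measurable]: "w \<in> borel_measurable M" unfolding w_def by measurable
  have w_nn: "0 \<le> w \<psi>" if "\<psi> \<in> space M" for \<psi>
    unfolding w_def using q_nonneg[OF z that] tau_nonneg[OF that] by simp
  have tw: "\<tau> \<psi> * w \<psi> = q z \<psi>" if "\<psi> \<in> space M" for \<psi>
    unfolding w_def using support[OF that] by (cases "\<tau> \<psi> = 0") auto
  define m where "m = marg M q z"
  define \<mu> where "\<mu> = distr P borel w"
  define Sm where "Sm K \<psi>s = (\<Sum>k\<in>{1..K}. w (\<psi>s k))" for K and \<psi>s :: "nat \<Rightarrow> 'p"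
  have Sm_meas[measurable]: "Sm K \<in> borel_measurable (PiM {1..K} (\<lambda>_. P))" for K
    unfolding Sm_def by measurable
  define \<nu> where "\<nu> K = distr (PiM {1..K} (\<lambda>_. P)) borel (Sm K)" for K
  have T_eq: "tau_prod M \<tau> K = PiM {1..K} (\<lambda>_. P)" for K unfolding tau_prod_def P_def ..
  have sets_mu[measurable_cong]: "sets \<mu> = sets borel" unfolding \<mu>_def by simp
  have sets_nu[measurable_cong]: "sets (\<nu> K) = sets borel" for K unfolding \<nu>_def by simp
  have nu_prob: "prob_space (\<nu> K)" for K unfolding \<nu>_def
    by (intro prob_space.prob_space_distr[OF prob_space_PiM] Sm_meas P_prob)
  have mu_prob: "prob_space \<mu>" unfolding \<mu>_def by (rule prob_space.prob_space_distr[OF P_prob]) simp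
  interpret PS: product_sigma_finite "\<lambda>_. P"
    by (simp add: product_sigma_finite_def prob_space_imp_sigma_finite P_prob)
  have Sm_Suc: "Sm (Suc K) (\<psi>s(Suc K := y)) = w y + Sm K \<psi>s" for K \<psi>s y
  proof -
    have "Sm (Suc K) (\<psi>s(Suc K := y)) = w y + (\<Sum>k\<in>{1..K}. w ((\<psi>s(Suc K := y)) k))"
      unfolding Sm_def by (subst atLeastAtMostSuc_conv) auto
    also have "(\<Sum>k\<in>{1..K}. w ((\<psi>s(Suc K := y)) k)) = Sm K \<psi>s"
      unfolding Sm_def by (intro sum.cong) auto
    finally show ?thesis .
  qed
  have nn_nuS: "(\<integral>\<^sup>+t. f t \<partial>\<nu> (Suc K)) = (\<integral>\<^sup>+t. f t \<partial>distr (\<mu> \<Otimes>\<^sub>M \<nu> K) borel (\<lambda>(x,s). x + s))"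
    if f[measurable]: "f \<in> borel_measurable borel" for f K
  proof -
    interpret S: sigma_finite_measure "\<nu> K" using nu_prob[of K] by (rule prob_space_imp_sigma_finite)
    have ins: "{1..Suc K} = insert (Suc K) {1..K}" by (rule atLeastAtMostSuc_conv) simp
    have "(\<integral>\<^sup>+t. f t \<partial>\<nu> (Suc K)) = (\<integral>\<^sup>+\<psi>s. f (Sm (Suc K) \<psi>s) \<partial>PiM {1..Suc K} (\<lambda>_. P))"
      unfolding \<nu>_def by (rule nn_integral_distr) measurable
    also have "\<dots> = (\<integral>\<^sup>+\<psi>s. f (Sm (Suc K) \<psi>s) \<partial>PiM (insert (Suc K) {1..K}) (\<lambda>_. P))"
      unfolding ins ..
    also have "\<dots> = (\<integral>\<^sup>+y. \<integral>\<^sup>+\<psi>s. f (Sm (Suc K) (\<psi>s(Suc K := y))) \<partial>PiM {1..K} (\<lambda>_. P) \<partial>P)"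
    proof -
      have mS: "(\<lambda>\<psi>s. f (Sm (Suc K) \<psi>s)) \<in> borel_measurable (PiM (insert (Suc K) {1..K}) (\<lambda>_. P))"
        using Sm_meas[of "Suc K"] unfolding ins by measurable
      show ?thesis by (rule PS.product_nn_integral_insert_rev[OF _ _ mS]) auto
    qed
    also have "\<dots> = (\<integral>\<^sup>+y. \<integral>\<^sup>+\<psi>s. f (w y + Sm K \<psi>s) \<partial>PiM {1..K} (\<lambda>_. P) \<partial>P)"
      unfolding Sm_Suc ..
    also have "\<dots> = (\<integral>\<^sup>+y. \<integral>\<^sup>+s. f (w y + s) \<partial>\<nu> K \<partial>P)"
      unfolding \<nu>_def by (intro nn_integral_cong nn_integral_distr[symmetric]) measurable
    also have "\<dots> = (\<integral>\<^sup>+x. \<integral>\<^sup>+s. f (x + s) \<partial>\<nu> K \<partial>\<mu>)"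
      unfolding \<mu>_def by (rule nn_integral_distr[symmetric]) measurable
    also have "\<dots> = (\<integral>\<^sup>+p. f (fst p + snd p) \<partial>(\<mu> \<Otimes>\<^sub>M \<nu> K))"
      by (subst S.nn_integral_fst[symmetric]) auto
    also have "\<dots> = (\<integral>\<^sup>+t. f t \<partial>distr (\<mu> \<Otimes>\<^sub>M \<nu> K) borel (\<lambda>(x,s). x + s))"
      by (subst nn_integral_distr) (auto simp: case_prod_beta')
    finally show ?thesis .
  qed
  have nuS: "\<nu> (Suc K) = distr (\<mu> \<Otimes>\<^sub>M \<nu> K) borel (\<lambda>(x,s). x + s)" for K
  proof (rule measure_eqI)
    show "sets (\<nu> (Suc K)) = sets (distr (\<mu> \<Otimes>\<^sub>M \<nu> K) borel (\<lambda>(x, s). x + s))" by (simp add: sets_nu)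
    fix A assume A: "A \<in> sets (\<nu> (Suc K))"
    then have A': "A \<in> sets borel" by (simp add: sets_nu)
    have "emeasure (\<nu> (Suc K)) A = (\<integral>\<^sup>+t. indicator A t \<partial>\<nu> (Suc K))"
      using A by simp
    also have "\<dots> = (\<integral>\<^sup>+t. indicator A t \<partial>distr (\<mu> \<Otimes>\<^sub>M \<nu> K) borel (\<lambda>(x,s). x + s))"
      by (rule nn_nuS) (use A' in simp)
    also have "\<dots> = emeasure (distr (\<mu> \<Otimes>\<^sub>M \<nu> K) borel (\<lambda>(x,s). x + s)) A"
      using A' by (intro nn_integral_indicator) simp
    finally show "emeasure (\<nu> (Suc K)) A = emeasure (distr (\<mu> \<Otimes>\<^sub>M \<nu> K) borel (\<lambda>(x, s). x + s)) A" .
  qed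
  define Q where "Q = density M (\<lambda>\<psi>. ennreal (cond M q z \<psi>))"
  have sets_Q[measurable_cong]: "sets Q = sets M" by (simp add: Q_def)
  have Lam_eq: "distr Q borel w = density \<mu> (\<lambda>x. ennreal (x / m))"
  proof (rule measure_eqI)
    show "sets (distr Q borel w) = sets (density \<mu> (\<lambda>x. ennreal (x / m)))" by (simp add: sets_mu)
    fix A assume A: "A \<in> sets (distr Q borel w)"
    then have A'[measurable]: "A \<in> sets borel" by simp
    have "emeasure (distr Q borel w) A = (\<integral>\<^sup>+x. indicator A x \<partial>distr Q borel w)"
      using A by simp
    also have "\<dots> = (\<integral>\<^sup>+\<psi>. indicator A (w \<psi>) \<partial>Q)"
      by (rule nn_integral_distr) measurable
    also have "\<dots> = (\<integral>\<^sup>+\<psi>. ennreal (cond M q z \<psi>) * indicator A (w \<psi>) \<partial>M)"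
    proof -
      have cm[measurable]: "(\<lambda>\<psi>. cond M q z \<psi>) \<in> borel_measurable M" unfolding cond_def by measurable
      show ?thesis unfolding Q_def by (rule nn_integral_density) measurable
    qed
    also have "\<dots> = (\<integral>\<^sup>+\<psi>. ennreal (\<tau> \<psi>) * (ennreal (w \<psi> / m) * indicator A (w \<psi>)) \<partial>M)"
    proof (rule nn_integral_cong)
      fix \<psi> assume \<psi>: "\<psi> \<in> space M"
      have "cond M q z \<psi> = \<tau> \<psi> * (w \<psi> / m)"
        unfolding cond_def m_def using tw[OF \<psi>] by simp
      moreover have "0 \<le> w \<psi> / m" using w_nn[OF \<psi>] qz_pos unfolding m_def by simp
      ultimately show "ennreal (cond M q z \<psi>) * indicator A (w \<psi>) = ennreal (\<tau> \<psi>) * (ennreal (w \<psi> / m) * indicator A (w \<psi>))"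
      proof -
        have "ennreal (\<tau> \<psi> * (w \<psi> / m)) = ennreal (\<tau> \<psi>) * ennreal (w \<psi> / m)"
          using tau_nonneg[OF \<psi>] \<open>0 \<le> w \<psi> / m\<close> by (rule ennreal_mult)
        then show ?thesis using \<open>cond M q z \<psi> = \<tau> \<psi> * (w \<psi> / m)\<close> by (simp only: mult.assoc)
      qed
    qed
    also have "\<dots> = (\<integral>\<^sup>+\<psi>. ennreal (w \<psi> / m) * indicator A (w \<psi>) \<partial>P)"
      unfolding P_def by (rule nn_integral_density[symmetric]) measurable
    also have "\<dots> = (\<integral>\<^sup>+x. ennreal (x / m) * indicator A x \<partial>\<mu>)"
      unfolding \<mu>_def by (rule nn_integral_distr[symmetric]) measurable
    also have "\<dots> = emeasure (density \<mu> (\<lambda>x. ennreal (x / m))) A"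
      by (rule emeasure_density[symmetric]) measurable
    finally show "emeasure (distr Q borel w) A = emeasure (density \<mu> (\<lambda>x. ennreal (x / m))) A" .
  qed
  have iw: "iw_log q \<tau> z K \<psi>0 \<psi>s = ln ((1 / real (K + 1)) * (w \<psi>0 + Sm K \<psi>s))" for K \<psi>0 \<psi>s
  proof -
    have "(\<Sum>k\<in>{0..K}. (let \<psi> = (if k = 0 then \<psi>0 else \<psi>s k) in q z \<psi> / \<tau> \<psi>))
        = (let \<psi> = \<psi>0 in q z \<psi> / \<tau> \<psi>) + (\<Sum>k\<in>{Suc 0..K}. (let \<psi> = (if k = 0 then \<psi>0 else \<psi>s k) in q z \<psi> / \<tau> \<psi>))"
      by (subst sum.atLeast_Suc_atMost) auto
    also have "(\<Sum>k\<in>{Suc 0..K}. (let \<psi> = (if k = 0 then \<psi>0 else \<psi>s k) in q z \<psi> / \<tau> \<psi>)) = Sm K \<psi>s"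
      unfolding Sm_def w_def by (intro sum.cong) (auto simp: Let_def)
    finally show ?thesis unfolding iw_log_def w_def by (simp add: Let_def)
  qed
  have G_meas[measurable]: "(\<lambda>p. ln ((1 / real (K + 1)) * (fst p + snd p))) \<in> borel_measurable (borel \<Otimes>\<^sub>M borel)" for K
    by measurable
  have int_hyp: "integrable (density \<mu> (\<lambda>x. ennreal (x / m)) \<Otimes>\<^sub>M \<nu> K)
       (\<lambda>p. ln ((1 / real (K + 1)) * (fst p + snd p)))" for K
  proof -
    have pd: "distr Q borel w \<Otimes>\<^sub>M \<nu> K = distr (Q \<Otimes>\<^sub>M PiM {1..K} (\<lambda>_. P)) (borel \<Otimes>\<^sub>M borel) (\<lambda>(x, y). (w x, Sm K y))"
    proof -
      have sf: "sigma_finite_measure (distr (PiM {1..K} (\<lambda>_. P)) borel (Sm K))"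
        using nu_prob[of K] unfolding \<nu>_def by (rule prob_space_imp_sigma_finite)
      show ?thesis unfolding \<nu>_def by (rule pair_measure_distr[OF _ Sm_meas sf]) measurable
    qed
    have F[measurable]: "(\<lambda>(x, y). (w x, Sm K y)) \<in> measurable (Q \<Otimes>\<^sub>M PiM {1..K} (\<lambda>_. P)) (borel \<Otimes>\<^sub>M borel)"
      by measurable
    have "integrable (Q \<Otimes>\<^sub>M PiM {1..K} (\<lambda>_. P)) (\<lambda>x. iw_log q \<tau> z K (fst x) (snd x))"
      using U_finite[of K] unfolding T_eq Q_def .
    then have "integrable (Q \<Otimes>\<^sub>M PiM {1..K} (\<lambda>_. P)) (\<lambda>x. (\<lambda>p. ln ((1 / real (K + 1)) * (fst p + snd p))) ((\<lambda>(x, y). (w x, Sm K y)) x))"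
      unfolding iw by (simp add: case_prod_beta')
    then have "integrable (distr (Q \<Otimes>\<^sub>M PiM {1..K} (\<lambda>_. P)) (borel \<Otimes>\<^sub>M borel) (\<lambda>(x, y). (w x, Sm K y))) (\<lambda>p. ln ((1 / real (K + 1)) * (fst p + snd p)))"
      by (subst integrable_distr_eq[OF F]) auto
    then show ?thesis unfolding pd[symmetric] Lam_eq .
  qed
  have U_eq: "U M q \<tau> z K = (\<integral>x. (\<integral>s. ln ((1 / real (K + 1)) * (x + s)) \<partial>\<nu> K) \<partial>density \<mu> (\<lambda>x. ennreal (x / m)))" for K
  proof -
    interpret S: sigma_finite_measure "\<nu> K" using nu_prob[of K] by (rule prob_space_imp_sigma_finite)
    have "U M q \<tau> z K = (\<integral>\<psi>0. (\<integral>\<psi>s. ln ((1 / real (K + 1)) * (w \<psi>0 + Sm K \<psi>s)) \<partial>PiM {1..K} (\<lambda>_. P)) \<partial>Q)"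
      unfolding U_def T_eq Q_def iw ..
    also have "\<dots> = (\<integral>\<psi>0. (\<integral>s. ln ((1 / real (K + 1)) * (w \<psi>0 + s)) \<partial>\<nu> K) \<partial>Q)"
      unfolding \<nu>_def by (intro Bochner_Integration.integral_cong refl integral_distr[symmetric]) measurable
    also have "\<dots> = (\<integral>x. (\<integral>s. ln ((1 / real (K + 1)) * (x + s)) \<partial>\<nu> K) \<partial>distr Q borel w)"
      by (rule integral_distr[symmetric]) measurable
    finally show ?thesis unfolding Lam_eq .
  qed
  have a1: "prob_space \<mu>" unfolding \<mu>_def by (rule prob_space.prob_space_distr[OF P_prob]) simp
  have a2: "sets \<mu> = sets borel" unfolding \<mu>_def by simp
  have a3: "AE x in \<mu>. 0 \<le> x" unfolding \<mu>_def
    by (subst AE_distr_iff) (auto simp: space_P intro!: AE_I2 w_nn)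
  have a4: "(\<integral>\<^sup>+x. ennreal x \<partial>\<mu>) = ennreal m"
  proof -
    have "(\<integral>\<^sup>+x. ennreal x \<partial>\<mu>) = (\<integral>\<^sup>+\<psi>. ennreal (w \<psi>) \<partial>P)"
      unfolding \<mu>_def by (subst nn_integral_distr) auto
    also have "\<dots> = (\<integral>\<^sup>+\<psi>. ennreal (\<tau> \<psi>) * ennreal (w \<psi>) \<partial>M)"
      unfolding P_def by (subst nn_integral_density) auto
    also have "\<dots> = (\<integral>\<^sup>+\<psi>. ennreal (q z \<psi>) \<partial>M)"
      by (rule nn_integral_cong) (simp add: ennreal_mult[symmetric] tau_nonneg w_nn tw)
    also have "\<dots> = ennreal m"
      unfolding m_def marg_def
      by (rule nn_integral_eq_integral[OF qz_int]) (use q_nonneg[OF z] in auto)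
    finally show ?thesis .
  qed
  have a5: "0 < m" using qz_pos unfolding m_def .
  have a6: "prob_space (\<nu> K)" for K unfolding \<nu>_def
    by (intro prob_space.prob_space_distr[OF prob_space_PiM] Sm_meas P_prob)
  have a7: "sets (\<nu> K) = sets borel" for K unfolding \<nu>_def by simp
  have a8: "AE s in \<nu> K. 0 \<le> s" for K unfolding \<nu>_def
    by (subst AE_distr_iff[OF Sm_meas]) (auto simp: space_PiM space_P Sm_def PiE_def Pi_def intro!: AE_I2 sum_nonneg w_nn)
  have a9: "AE s in \<nu> 0. s = 0" unfolding \<nu>_def
    by (subst AE_distr_iff[OF Sm_meas]) (auto simp: Sm_def intro!: AE_I2)
  have a10: "\<nu> (Suc K) = distr (\<mu> \<Otimes>\<^sub>M \<nu> K) borel (\<lambda>(x,s). x + s)" for K by (rule nuS)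
  have a11: "integrable (density \<mu> (\<lambda>x. ennreal (x / m)) \<Otimes>\<^sub>M \<nu> K)
     (\<lambda>p. ln ((1 / real (K + 1)) * (fst p + snd p)))" for K by (rule int_hyp)

  interpret C: core \<mu> m \<nu>
    by (rule core.intro[OF a1 a2 a3 a4 a5 a6 a7 a8 a9 a10 a11])
  show ?thesis using C.core_main unfolding U_eq m_def by simp
qed

end
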